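(* Let $X=\{1,\ldots,n\}$, let $\mathcal{P}=\{X_1,\ldots,X_m\}$ be an $m$-partition of $X$, and let $f\in S(X,\mathcal{P})$. If $f$ is an $n$-cycle, then (i) $\chi^{(f)}$ is an $m$-cycle on $\{1,\ldots,m\}$, and (ii) $\mathcal{P}$ is a uniform partition of $X$.
   Context: Maps are written on the right. An $m$-partition is a partition with exactly $m$ blocks; a partition is uniform if all its blocks have the same size. An $r$-cycle on a set $Y$ is a permutation $(a_1,\ldots,a_r)$ of $Y$ with $a_if=a_{i+1}$ for $i<r$, $a_rf=a_1$ and fixing all other elements; an $n$-cycle on $X$ thus cyclically permutes all of $X$ (a $1$-cycle is the identity). $T(X,\mathcal{P})$ is the semigroup of maps $f\colon X\to X$ such that for every $i$ there is $j$ with $X_if\subseteq X_j$, and $S(X,\mathcal{P})$ is its group of units (bijections $f$ with $f,f^{-1}\in T(X,\mathcal{P})$). For $f\in T(X,\mathcal{P})$, $\chi^{(f)}\colon\{1,\ldots,m\}\to\{1,\ldots,m\}$ is defined by $i\chi^{(f)}=j$ whenever $X_if\subseteq X_j$. *)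

theory Defs
  imports Main
begin

definition is_m_partition :: "nat set \<Rightarrow> nat \<Rightarrow> (nat \<Rightarrow> nat set) \<Rightarrow> bool" where
  "is_m_partition X m Xp \<longleftrightarrow>
     (\<forall>i\<in>{1..m}. Xp i \<noteq> {} \<and> Xp i \<subseteq> X) \<and>
     (\<forall>i\<in>{1..m}. \<forall>j\<in>{1..m}. i \<noteq> j \<longrightarrow> Xp i \<inter> Xp j = {}) \<and>
     (\<Union>i\<in>{1..m}. Xp i) = X"

definition uniform_partition :: "nat \<Rightarrow> (nat \<Rightarrow> nat set) \<Rightarrow> bool" where
  "uniform_partition m Xp \<longleftrightarrow> (\<forall>i\<in>{1..m}. \<forall>j\<in>{1..m}. card (Xp i) = card (Xp j))"

definition in_T :: "nat set \<Rightarrow> nat \<Rightarrow> (nat \<Rightarrow> nat set) \<Rightarrow> (nat \<Rightarrow> nat) \<Rightarrow> bool" where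
  "in_T X m Xp f \<longleftrightarrow> f ` X \<subseteq> X \<and> (\<forall>i\<in>{1..m}. \<exists>j\<in>{1..m}. f ` Xp i \<subseteq> Xp j)"

definition in_S :: "nat set \<Rightarrow> nat \<Rightarrow> (nat \<Rightarrow> nat set) \<Rightarrow> (nat \<Rightarrow> nat) \<Rightarrow> bool" where
  "in_S X m Xp f \<longleftrightarrow> bij_betw f X X \<and> in_T X m Xp f \<and> in_T X m Xp (inv_into X f)"

definition chi :: "nat \<Rightarrow> (nat \<Rightarrow> nat set) \<Rightarrow> (nat \<Rightarrow> nat) \<Rightarrow> nat \<Rightarrow> nat" where
  "chi m Xp f i = (THE j. j \<in> {1..m} \<and> f ` Xp i \<subseteq> Xp j)"

definition is_cycle_on :: "'a set \<Rightarrow> 'a set \<Rightarrow> ('a \<Rightarrow> 'a) \<Rightarrow> bool" where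
  "is_cycle_on A Y g \<longleftrightarrow>
     (\<exists>as. distinct as \<and> set as = Y \<and>
        (\<forall>k < length as. g (as ! k) = as ! ((k + 1) mod length as))) \<and>
     (\<forall>x\<in>A - Y. g x = x)"

end

theory Submission
  imports Defs
begin

lemma funpow_period:
  assumes "(g ^^ p) x = x"
  shows "(g ^^ (p * q)) x = x"
proof (induction q)
  case 0 then show ?case by simp
next
  case (Suc q)
  have "(g ^^ (p * Suc q)) x = (g ^^ p) ((g ^^ (p * q)) x)"
    by (simp add: funpow_add mult.commute)
  then show ?case using Suc assms by simp
qed

lemma funpow_mod_period:
  assumes "(g ^^ p) x = x"
  shows "(g ^^ j) x = (g ^^ (j mod p)) x"
proof -
  have "j = j mod p + p * (j div p)" by simp
  then have "(g ^^ j) x = (g ^^ (j mod p)) ((g ^^ (p * (j div p))) x)"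
    by (metis funpow_add o_apply)
  then show ?thesis using funpow_period[OF assms] by simp
qed

theorem proposition4p5:
  fixes n m :: nat and Xp :: "nat \<Rightarrow> nat set" and f :: "nat \<Rightarrow> nat"
  assumes "is_m_partition {1..n} m Xp"
    and "in_S {1..n} m Xp f"
    and "is_cycle_on {1..n} {1..n} f"
  shows "is_cycle_on {1..m} {1..m} (chi m Xp f) \<and> uniform_partition m Xp"
proof -
  define c where "c = chi m Xp f"
  have ne: "\<And>i. i \<in> {1..m} \<Longrightarrow> Xp i \<noteq> {} \<and> Xp i \<subseteq> {1..n}"
    using assms(1) unfolding is_m_partition_def by blast
  have disj: "\<And>i j x. i \<in> {1..m} \<Longrightarrow> j \<in> {1..m} \<Longrightarrow> x \<in> Xp i \<Longrightarrow> x \<in> Xp j \<Longrightarrow> i = j"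
    using assms(1) unfolding is_m_partition_def by blast
  have cov: "\<And>x. x \<in> {1..n} \<Longrightarrow> \<exists>i\<in>{1..m}. x \<in> Xp i"
    using assms(1) unfolding is_m_partition_def by blast
  have fim: "f ` {1..n} \<subseteq> {1..n}" and blk: "\<forall>i\<in>{1..m}. \<exists>j\<in>{1..m}. f ` Xp i \<subseteq> Xp j"
    using assms(2) unfolding in_S_def in_T_def by auto
  have injf: "inj_on f {1..n}" using assms(2) unfolding in_S_def bij_betw_def by auto
  have cprop: "c i \<in> {1..m} \<and> f ` Xp i \<subseteq> Xp (c i)" if i: "i \<in> {1..m}" for i
  proof -
    obtain j where j: "j \<in> {1..m}" "f ` Xp i \<subseteq> Xp j" using blk i by blast
    obtain x where x: "x \<in> Xp i" using ne[OF i] by blast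
    have "(THE j. j \<in> {1..m} \<and> f ` Xp i \<subseteq> Xp j) = j"
    proof (rule the_equality)
      show "j \<in> {1..m} \<and> f ` Xp i \<subseteq> Xp j" using j by simp
    next
      fix j' assume "j' \<in> {1..m} \<and> f ` Xp i \<subseteq> Xp j'"
      then show "j' = j" using disj[of j' j "f x"] j x by blast
    qed
    then show ?thesis using j unfolding c_def chi_def by simp
  qed
  have iter: "(c ^^ k) i \<in> {1..m} \<and> (f ^^ k) x \<in> Xp ((c ^^ k) i)"
    if "i \<in> {1..m}" "x \<in> Xp i" for k i x
    using that
  proof (induction k)
    case 0 then show ?case by simp
  next
    case (Suc k)
    then show ?case using cprop[of "(c ^^ k) i"] by auto
  qed
  have cardle: "card (Xp i) \<le> card (Xp (c i))" if "i \<in> {1..m}" for i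
  proof -
    have fin: "finite (Xp (c i))" using ne[of "c i"] cprop[OF that] finite_subset by blast
    have "inj_on f (Xp i)" using injf ne[OF that] inj_on_subset by blast
    then have "card (f ` Xp i) = card (Xp i)" by (simp add: card_image)
    moreover have "card (f ` Xp i) \<le> card (Xp (c i))"
      using card_mono[OF fin] cprop[OF that] by blast
    ultimately show ?thesis by simp
  qed
  have cardle_iter: "card (Xp i) \<le> card (Xp ((c ^^ k) i))" if "i \<in> {1..m}" for i k
    using that
  proof (induction k)
    case 0 then show ?case by simp
  next
    case (Suc k)
    have "(c ^^ k) i \<in> {1..m}"
      using iter[OF Suc.prems, of _ k] ne[OF Suc.prems] by blast
    then show ?case using Suc cardle[of "(c ^^ k) i"] by simp
  qed
  show ?thesis
  proof (cases "m = 0")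
    case True
    then show ?thesis unfolding is_cycle_on_def uniform_partition_def c_def[symmetric]
      by (intro conjI exI[of _ "[]"]) auto
  next
    case False
    then have m1: "1 \<in> {1..m}" by simp
    obtain as where as: "distinct as" "set as = {1..n}"
      "\<forall>k < length as. f (as ! k) = as ! ((k + 1) mod length as)"
      using assms(3) unfolding is_cycle_on_def by blast
    have ln: "length as = n" using as(1,2) distinct_card by fastforce
    have n0: "n > 0" using ne[OF m1] by auto
    have fk: "(f ^^ k) (as ! 0) = as ! (k mod n)" for k
    proof (induction k)
      case 0 then show ?case by simp
    next
      case (Suc k)
      have "k mod n < length as" using n0 ln by simp
      then have "f (as ! (k mod n)) = as ! ((k mod n + 1) mod n)" using as(3) ln by simp
      also have "... = as ! (Suc k mod n)" by (simp add: mod_Suc_eq)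
      finally show ?case using Suc by simp
    qed
    have a0: "as ! 0 \<in> {1..n}" using as(2) ln n0 nth_mem by (metis)
    obtain i0 where i0: "i0 \<in> {1..m}" "as ! 0 \<in> Xp i0" using cov[OF a0] by blast
    have onto: "\<exists>k. j = (c ^^ k) i0" if j: "j \<in> {1..m}" for j
    proof -
      obtain y where y: "y \<in> Xp j" using ne[OF j] by blast
      then have "y \<in> set as" using ne[OF j] as(2) by blast
      then obtain k where k: "k < n" "y = as ! k" using ln by (metis in_set_conv_nth)
      have "(f ^^ k) (as ! 0) = y" using fk k by simp
      then have "y \<in> Xp ((c ^^ k) i0)" "(c ^^ k) i0 \<in> {1..m}" using iter[OF i0] by metis+
      then show ?thesis using disj j y by blast
    qed
    have inm: "(c ^^ k) i0 \<in> {1..m}" for k using iter[OF i0] by blast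
    have cn: "(c ^^ n) i0 = i0"
    proof -
      have "(f ^^ n) (as ! 0) = as ! 0" using fk[of n] by simp
      then have "as ! 0 \<in> Xp ((c ^^ n) i0)" using iter[OF i0, of n] by metis
      then show ?thesis using disj[OF inm i0(1)] i0(2) by blast
    qed
    define p where "p = (LEAST p. 0 < p \<and> (c ^^ p) i0 = i0)"
    have pP: "0 < p \<and> (c ^^ p) i0 = i0" unfolding p_def
      by (rule LeastI[of _ n]) (use n0 cn in simp)
    have pmin: "\<And>q. 0 < q \<Longrightarrow> (c ^^ q) i0 = i0 \<Longrightarrow> p \<le> q"
      unfolding p_def by (rule Least_le) simp
    define bs where "bs = map (\<lambda>k. (c ^^ k) i0) [0..<p]"
    have dist: "distinct bs" unfolding bs_def distinct_map
    proof
      show "inj_on (\<lambda>k. (c ^^ k) i0) (set [0..<p])"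
      proof (rule inj_onI, rule ccontr)
        have gen: "False" if kl: "k < l" "l < p" "(c ^^ k) i0 = (c ^^ l) i0" for k l
        proof -
          have "(c ^^ (p - l + k)) i0 = (c ^^ (p - l)) ((c ^^ k) i0)" by (simp add: funpow_add)
          also have "... = (c ^^ (p - l)) ((c ^^ l) i0)" using kl by simp
          also have "... = (c ^^ p) i0" proof -
            have "p = (p - l) + l" using kl by simp
            then show ?thesis by (metis funpow_add o_apply)
          qed
          also have "... = i0" using pP by simp
          finally show False using pmin[of "p - l + k"] kl by simp
        qed
        fix k l assume "k \<in> set [0..<p]" "l \<in> set [0..<p]" "(c ^^ k) i0 = (c ^^ l) i0" "k \<noteq> l"
        then show False using gen[of k l] gen[of l k] by (cases "k < l") auto
      qed
    qed simp
    have setbs: "set bs = {1..m}"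
    proof
      show "set bs \<subseteq> {1..m}" unfolding bs_def using inm by auto
    next
      show "{1..m} \<subseteq> set bs"
      proof
        fix j assume "j \<in> {1..m}"
        then obtain k where k: "j = (c ^^ k) i0" using onto by blast
        then have "j = (c ^^ (k mod p)) i0" using funpow_mod_period[where g=c and p=p and x=i0 and j=k] pP by simp
        moreover have "k mod p < p" using pP by simp
        ultimately show "j \<in> set bs" unfolding bs_def by auto
      qed
    qed
    have lbs: "length bs = m" using distinct_card[OF dist] setbs by simp
    have lp: "length bs = p" unfolding bs_def by simp
    have cyc: "\<forall>k < length bs. c (bs ! k) = bs ! ((k + 1) mod length bs)"
    proof (intro allI impI)
      fix k assume k: "k < length bs"
      have "c (bs ! k) = (c ^^ Suc k) i0" using k lp unfolding bs_def by simp
      also have "... = (c ^^ (Suc k mod p)) i0" using funpow_mod_period[where g=c and p=p and x=i0] pP by blast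
      also have "... = bs ! ((k + 1) mod length bs)" using lp pP unfolding bs_def by simp
      finally show "c (bs ! k) = bs ! ((k + 1) mod length bs)" .
    qed
    have part1: "is_cycle_on {1..m} {1..m} c"
      unfolding is_cycle_on_def using dist setbs cyc by blast
    have cardeq: "card (Xp j) = card (Xp i0)" if j: "j \<in> {1..m}" for j
    proof -
      obtain k where k: "j = (c ^^ k) i0" using onto[OF j] by blast
      have "(c ^^ (p * (k + 1))) i0 = i0" using funpow_period[where g=c and p=p and x=i0] pP by blast
      moreover have "k \<le> p * (k + 1)" using pP by (cases p) auto
      then have "p * (k + 1) = (p * (k + 1) - k) + k" by simp
      ultimately have "(c ^^ ((p * (k + 1) - k) + k)) i0 = i0" by simp
      then have "(c ^^ (p * (k + 1) - k)) j = i0" using k by (simp only: funpow_add o_apply)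
      then have "card (Xp j) \<le> card (Xp i0)" using cardle_iter[OF j, of "p * (k + 1) - k"] by simp
      moreover have "card (Xp i0) \<le> card (Xp j)" using cardle_iter[OF i0(1), of k] k by simp
      ultimately show ?thesis by simp
    qed
    have "uniform_partition m Xp" unfolding uniform_partition_def using cardeq by simp
    then show ?thesis using part1 c_def by simp
  qed
qed

end
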